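(* Let $\{\Lambda_{t,t'}\}_{t\ge t'\ge0}$ be completely positive trace-preserving linear maps on operators of $\mathcal H_E$ satisfying $\Lambda_{t,t'}\Lambda_{t',t''}=\Lambda_{t,t''}$ for $t\ge t'\ge t''$ and $\Lambda_{t,t}=\mathrm{id}$. Define the modified quasi-probabilities $\tilde q^{(k)}$ below. Then: (i) $\tilde q^{(k)}$ satisfy the Chapman–Kolmogorov consistency criterion: for $k\ge2$, $1\le l\le k$, $\sum_{\xi_l,\eta_l\in\Omega_{\hat V}}\tilde q^{(k)}(\boldsymbol\xi\boldsymbol\eta\mathbf t)=\tilde q^{(k-1)}$ with the $l$-th triple $(\xi_l,\eta_l,t_l)$ removed, and $\sum_{\xi_1,\eta_1}\tilde q^{(1)}=1$. (ii) If moreover, for all $t\ge t'$, $\Lambda_{t,t'}(|n\rangle\langle n|)\in\mathrm{span}\{|m\rangle\langle m|\}_m$ for every $n$ and $\Lambda_{t,t'}(|n\rangle\langle n'|)\in\mathrm{span}\{|m\rangle\langle m'|: m\ne m'\}$ for every $n\ne n'$, then $\tilde q^{(k)}(\boldsymbol\xi\boldsymbol\eta\mathbf t)=\delta_{\boldsymbol\xi,\boldsymbol\eta}\tilde p^{(k)}(\boldsymbol\xi\mathbf t)$ for all $k$, where $$\tilde p^{(k)}(\boldsymbol\xi\mathbf t)=\Big(\prod_{l=1}^k\sum_{n_l:v_{n_l}=\xi_l}\Big)\langle n_k|\Lambda_{t_k,0}\hat\rho_E|n_k\rangle\prod_{l=1}^{k-1}\langle n_l|\Lambda_{t_l,t_{l+1}}(|n_{l+1}\rangle\langle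 n_{l+1}|)|n_l\rangle\ \ge0,$$ and $\{\tilde p^{(k)}\}_{k\ge1}$ is a consistent family of joint probability distributions (defining a stochastic process with values in $\Omega_{\hat V}$).
   Context: $\mathcal H_E$ finite-dimensional, $\hat V_E=\sum_n v_n|n\rangle\langle n|$ with a fixed orthonormal eigenbasis $\{|n\rangle\}$, $\Omega_{\hat V}$ its set of distinct eigenvalues, $\hat\rho_E$ a density matrix. Modified propagators: $T_{t,t'}(nm|n'm')=\mathrm{tr}_E\big(|m\rangle\langle n|\,\Lambda_{t,t'}(|n'\rangle\langle m'|)\big)$. For $k\ge1$, $t_1>\dots>t_k\ge0$: $$\tilde q^{(k)}(\boldsymbol\xi\boldsymbol\eta\mathbf t)=\Big(\prod_{l=1}^k\sum_{n_l:\,v_{n_l}=\xi_l}\ \sum_{m_l:\,v_{m_l}=\eta_l}\Big)\delta_{n_1,m_1}\langle n_k|\Lambda_{t_k,0}\hat\rho_E|m_k\rangle\prod_{l=1}^{k-1}T_{t_l,t_{l+1}}(n_lm_l|n_{l+1}m_{l+1}).$$ $\delta_{\boldsymbol\xi,\boldsymbol\eta}=\prod_l\delta_{\xi_l,\eta_l}$. *)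

theory Defs
  imports Complex_Main "HOL-Library.Complex_Order" "HOL-Library.FuncSet"
begin

text \<open>Operators on the finite-dimensional space H_E are represented by their matrices
  in the fixed orthonormal eigenbasis of V_E, indexed by a finite type 'n:
  A i j = <i|A|j>.\<close>

type_synonym 'n op = "'n \<Rightarrow> 'n \<Rightarrow> complex"

definition ketbra :: "'n \<Rightarrow> 'n \<Rightarrow> 'n op" where
  "ketbra a b = (\<lambda>i j. if i = a \<and> j = b then 1 else 0)"

definition mmult :: "('n::finite) op \<Rightarrow> 'n op \<Rightarrow> 'n op" where
  "mmult A B = (\<lambda>i j. \<Sum>k\<in>UNIV. A i k * B k j)"

definition tr :: "('n::finite) op \<Rightarrow> complex" where
  "tr A = (\<Sum>i\<in>UNIV. A i i)"

definition psd_on :: "'i set \<Rightarrow> ('i \<Rightarrow> 'i \<Rightarrow> complex) \<Rightarrow> bool" where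
  "psd_on I X \<longleftrightarrow> (\<forall>x :: 'i \<Rightarrow> complex. 0 \<le> (\<Sum>i\<in>I. \<Sum>j\<in>I. cnj (x i) * X i j * x j))"

definition density :: "('n::finite) op \<Rightarrow> bool" where
  "density \<rho> \<longleftrightarrow> psd_on UNIV \<rho> \<and> tr \<rho> = 1"

definition lin_map :: "('n op \<Rightarrow> 'n op) \<Rightarrow> bool" where
  "lin_map L \<longleftrightarrow> (\<forall>a b X Y. L (\<lambda>i j. a * X i j + b * Y i j) = (\<lambda>i j. a * L X i j + b * L Y i j))"

definition trace_pres :: "(('n::finite) op \<Rightarrow> 'n op) \<Rightarrow> bool" where
  "trace_pres L \<longleftrightarrow> (\<forall>X. tr (L X) = tr X)"

text \<open>L \<otimes> id_m acting on operators on H_E \<otimes> C^m (second index component in {..<m}).\<close>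
definition ampl :: "('n op \<Rightarrow> 'n op) \<Rightarrow> (('n \<times> nat) \<Rightarrow> ('n \<times> nat) \<Rightarrow> complex)
    \<Rightarrow> (('n \<times> nat) \<Rightarrow> ('n \<times> nat) \<Rightarrow> complex)" where
  "ampl L X = (\<lambda>(i,a) (j,b). L (\<lambda>i' j'. X (i',a) (j',b)) i j)"

definition compl_pos :: "(('n::finite) op \<Rightarrow> 'n op) \<Rightarrow> bool" where
  "compl_pos L \<longleftrightarrow> (\<forall>(m::nat) X. psd_on (UNIV \<times> {..<m}) X \<longrightarrow> psd_on (UNIV \<times> {..<m}) (ampl L X))"

definition unit_span :: "(('n::finite) \<times> 'n) set \<Rightarrow> 'n op \<Rightarrow> bool" where
  "unit_span S A \<longleftrightarrow> (\<exists>c :: 'n \<times> 'n \<Rightarrow> complex. A = (\<lambda>i j. \<Sum>p\<in>S. c p * ketbra (fst p) (snd p) i j))"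

definition Tprop :: "(real \<Rightarrow> real \<Rightarrow> ('n::finite) op \<Rightarrow> 'n op) \<Rightarrow> real \<Rightarrow> real
    \<Rightarrow> 'n \<Rightarrow> 'n \<Rightarrow> 'n \<Rightarrow> 'n \<Rightarrow> complex" where
  "Tprop \<Lambda> t t' n m n' m' = tr (mmult (ketbra m n) (\<Lambda> t t' (ketbra n' m')))"

text \<open>Lists of length k; list position l (0-based) corresponds to index l+1 of the paper.\<close>
definition times_ok :: "real list \<Rightarrow> bool" where
  "times_ok ts \<longleftrightarrow> sorted_wrt (\<lambda>a b. a > b) ts \<and> (\<forall>t\<in>set ts. 0 \<le> t)"

definition del :: "nat \<Rightarrow> 'a list \<Rightarrow> 'a list" where
  "del l xs = take l xs @ drop (Suc l) xs"

definition qt :: "(real \<Rightarrow> real \<Rightarrow> ('n::finite) op \<Rightarrow> 'n op) \<Rightarrow> 'n op \<Rightarrow> ('n \<Rightarrow> real)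
    \<Rightarrow> real list \<Rightarrow> real list \<Rightarrow> real list \<Rightarrow> complex" where
  "qt \<Lambda> \<rho> v xs ys ts = (let k = length ts in
     \<Sum>ns\<in>PiE {..<k} (\<lambda>l. {n. v n = xs ! l}). \<Sum>ms\<in>PiE {..<k} (\<lambda>l. {m. v m = ys ! l}).
       (if ns 0 = ms 0 then 1 else 0) * \<Lambda> (ts ! (k - 1)) 0 \<rho> (ns (k - 1)) (ms (k - 1))
       * (\<Prod>l<k - 1. Tprop \<Lambda> (ts ! l) (ts ! Suc l) (ns l) (ms l) (ns (Suc l)) (ms (Suc l))))"

definition pt :: "(real \<Rightarrow> real \<Rightarrow> ('n::finite) op \<Rightarrow> 'n op) \<Rightarrow> 'n op \<Rightarrow> ('n \<Rightarrow> real)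
    \<Rightarrow> real list \<Rightarrow> real list \<Rightarrow> complex" where
  "pt \<Lambda> \<rho> v xs ts = (let k = length ts in
     \<Sum>ns\<in>PiE {..<k} (\<lambda>l. {n. v n = xs ! l}).
       \<Lambda> (ts ! (k - 1)) 0 \<rho> (ns (k - 1)) (ns (k - 1))
       * (\<Prod>l<k - 1. \<Lambda> (ts ! l) (ts ! Suc l) (ketbra (ns (Suc l)) (ns (Suc l))) (ns l) (ns l)))"

end

theory Submission
  imports Defs
begin


definition pcons :: "'a \<Rightarrow> (nat \<Rightarrow> 'a) \<Rightarrow> nat \<Rightarrow> 'a" where
  "pcons a q = (\<lambda>i. case i of 0 \<Rightarrow> a | Suc j \<Rightarrow> q j)"

lemma pcons_simps[simp]: "pcons a q 0 = a" "pcons a q (Suc j) = q j"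
  by (simp_all add: pcons_def)

lemma sum_PiE_Suc:
  "(\<Sum>p\<in>PiE {..<Suc k} A. f p) = (\<Sum>a\<in>A 0. \<Sum>q\<in>PiE {..<k} (\<lambda>i. A (Suc i)). f (pcons a q))"
proof -
  have bij: "bij_betw (\<lambda>(a,q). pcons a q) (A 0 \<times> PiE {..<k} (\<lambda>i. A (Suc i))) (PiE {..<Suc k} A)"
  proof (rule bij_betwI[where g = "\<lambda>p. (p 0, \<lambda>j. if j < k then p (Suc j) else undefined)"])
    show "(\<lambda>(a, q). pcons a q) \<in> A 0 \<times> (\<Pi>\<^sub>E i\<in>{..<k}. A (Suc i)) \<rightarrow> (\<Pi>\<^sub>E i\<in>{..<Suc k}. A i)"
      by (auto simp: PiE_def Pi_def extensional_def pcons_def split: nat.splits)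
    show "(\<lambda>p. (p 0, \<lambda>j. if j < k then p (Suc j) else undefined)) \<in> (\<Pi>\<^sub>E i\<in>{..<Suc k}. A i) \<rightarrow> A 0 \<times> (\<Pi>\<^sub>E i\<in>{..<k}. A (Suc i))"
      by (auto simp: PiE_def Pi_def extensional_def)
    show "\<And>x. x \<in> A 0 \<times> (\<Pi>\<^sub>E i\<in>{..<k}. A (Suc i)) \<Longrightarrow>
         (case case x of (a, q) \<Rightarrow> pcons a q of p \<Rightarrow> (p 0, \<lambda>j. if j < k then p (Suc j) else undefined)) = x"
      by (auto simp: PiE_def extensional_def)
    show "\<And>y. y \<in> (\<Pi>\<^sub>E i\<in>{..<Suc k}. A i) \<Longrightarrow>
         (case (y 0, \<lambda>j. if j < k then y (Suc j) else undefined) of (a, q) \<Rightarrow> pcons a q) = y"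
      by (auto simp: PiE_def extensional_def pcons_def fun_eq_iff split: nat.splits)
  qed
  show ?thesis
    by (simp add: sum.cartesian_product sum.reindex_bij_betw[OF bij, symmetric] case_prod_beta)
qed

lemma lin_zero: "lin_map L \<Longrightarrow> L (\<lambda>i j. 0) = (\<lambda>i j. 0)"
  unfolding lin_map_def by (drule spec[of _ 0], drule spec[of _ 0]) simp

lemma lin_sum:
  assumes "lin_map L" "finite F"
  shows "L (\<lambda>i j. \<Sum>p\<in>F. c p * X p i j) = (\<lambda>i j. \<Sum>p\<in>F. c p * L (X p) i j)"
  using assms(2)
proof induction
  case empty
  then show ?case using lin_zero[OF assms(1)] by simp
next
  case (insert a F)
  have "L (\<lambda>i j. \<Sum>p\<in>insert a F. c p * X p i j) = L (\<lambda>i j. c a * X a i j + 1 * (\<Sum>p\<in>F. c p * X p i j))"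
    using insert by simp
  also have "\<dots> = (\<lambda>i j. c a * L (X a) i j + 1 * L (\<lambda>i j. \<Sum>p\<in>F. c p * X p i j) i j)"
    by (rule assms(1)[unfolded lin_map_def, rule_format])
  finally show ?case using insert by simp
qed

lemma lin_sum1:
  assumes "lin_map L" "finite F"
  shows "L (\<lambda>i j. \<Sum>p\<in>F. X p i j) = (\<lambda>i j. \<Sum>p\<in>F. L (X p) i j)"
  using lin_sum[OF assms, of "\<lambda>_. 1" X] by simp

lemma if_conj_split: "(if P \<and> Q then a else b) = (if P then if Q then a else b else b)"
  by simp

lemma ifm1: "(if P then a else 0) * (x::'a::mult_zero) = (if P then a*x else 0)" by simp
lemma ifm2: "(x::'a::mult_zero) * (if P then a else 0) = (if P then x*a else 0)" by simp

lemma sum_if_out: "(\<Sum>k\<in>S. if P then f k else 0) = (if P then \<Sum>k\<in>S. f k else 0)" by simp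
lemma ifm3: "(if P then 1 else 0) * (x::'a::{mult_zero,monoid_mult}) = (if P then x else 0)" by simp
lemma ifm4: "(x::'a::{mult_zero,monoid_mult}) * (if P then 1 else 0) = (if P then x else 0)" by simp

lemma expand_op: "(Y :: ('n::finite) op) = (\<lambda>i j. \<Sum>n'\<in>UNIV. \<Sum>m'\<in>UNIV. Y n' m' * ketbra n' m' i j)"
proof (intro ext)
  fix i j
  have "\<And>n'. (\<Sum>m'\<in>UNIV. Y n' m' * ketbra n' m' i j) = (if n' = i then Y n' j else 0)"
    by (case_tac "n' = i") (simp_all add: ketbra_def ifm4)
  then show "Y i j = (\<Sum>n'\<in>UNIV. \<Sum>m'\<in>UNIV. Y n' m' * ketbra n' m' i j)" by (simp add: ifm4)
qed

lemma lin_expand: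
  assumes "lin_map (L :: ('n::finite) op \<Rightarrow> 'n op)"
  shows "L Y = (\<lambda>i j. \<Sum>n'\<in>UNIV. \<Sum>m'\<in>UNIV. Y n' m' * L (ketbra n' m') i j)"
proof -
  have "L Y = L (\<lambda>i j. \<Sum>n'\<in>UNIV. \<Sum>m'\<in>UNIV. Y n' m' * ketbra n' m' i j)"
    by (subst expand_op) simp
  also have "\<dots> = (\<lambda>i j. \<Sum>n'\<in>UNIV. L (\<lambda>i j. \<Sum>m'\<in>UNIV. Y n' m' * ketbra n' m' i j) i j)"
    by (rule lin_sum1[OF assms]) simp
  also have "\<dots> = (\<lambda>i j. \<Sum>n'\<in>UNIV. \<Sum>m'\<in>UNIV. Y n' m' * L (ketbra n' m') i j)"
    by (subst lin_sum[OF assms]) simp_all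
  finally show ?thesis .
qed

lemma Tprop_eq: "Tprop \<Lambda> t t' n m n' m' = \<Lambda> t t' (ketbra n' m') n m"
proof -
  let ?B = "\<Lambda> t t' (ketbra n' m')"
  have "\<And>i. (\<Sum>k\<in>UNIV. ketbra m n i k * ?B k i) = (if i = m then ?B n i else 0)"
    by (case_tac "i = m") (simp_all add: ketbra_def ifm3)
  then show ?thesis by (simp add: Tprop_def tr_def mmult_def)
qed

lemma sum_delta2:
  fixes g :: "'a \<Rightarrow> 'b \<Rightarrow> 'c::{comm_ring_1}"
  assumes "finite S" "finite T"
  shows "(\<Sum>a\<in>S. \<Sum>b\<in>T. (if a = n \<and> b = m then 1 else 0) * g a b) = (if n \<in> S \<and> m \<in> T then g n m else 0)"
proof -
  have "\<And>a. (\<Sum>b\<in>T. (if a = n \<and> b = m then 1 else 0) * g a b) = (if a = n then (if m \<in> T then g a m else 0) else 0)"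
    using assms by (case_tac "a = n") (simp_all add: ifm3)
  then show ?thesis using assms by simp
qed

lemma swap3: "(\<Sum>i\<in>I. \<Sum>a\<in>A. \<Sum>b\<in>B. f i a b) = (\<Sum>a\<in>A. \<Sum>b\<in>B. \<Sum>i\<in>I. f i a b)"
  by (subst sum.swap, rule sum.cong, rule refl, rule sum.swap)

lemma swap4: "(\<Sum>a\<in>A. \<Sum>b\<in>B. \<Sum>c\<in>C. \<Sum>d\<in>D. f a b c d) = (\<Sum>c\<in>C. \<Sum>d\<in>D. \<Sum>a\<in>A. \<Sum>b\<in>B. f a b c d)"
proof -
  have "(\<Sum>a\<in>A. \<Sum>b\<in>B. \<Sum>c\<in>C. \<Sum>d\<in>D. f a b c d) = (\<Sum>a\<in>A. \<Sum>c\<in>C. \<Sum>b\<in>B. \<Sum>d\<in>D. f a b c d)"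
    by (rule sum.cong[OF refl], rule sum.swap)
  also have "\<dots> = (\<Sum>c\<in>C. \<Sum>a\<in>A. \<Sum>b\<in>B. \<Sum>d\<in>D. f a b c d)" by (rule sum.swap)
  also have "\<dots> = (\<Sum>c\<in>C. \<Sum>a\<in>A. \<Sum>d\<in>D. \<Sum>b\<in>B. f a b c d)"
    by (rule sum.cong[OF refl])+ (rule sum.swap)
  also have "\<dots> = (\<Sum>c\<in>C. \<Sum>d\<in>D. \<Sum>a\<in>A. \<Sum>b\<in>B. f a b c d)"
    by (rule sum.cong[OF refl], rule sum.swap)
  finally show ?thesis .
qed

definition mask :: "('n \<Rightarrow> real) \<Rightarrow> real \<Rightarrow> real \<Rightarrow> 'n op \<Rightarrow> 'n op" where
  "mask v x y X = (\<lambda>n m. if v n = x \<and> v m = y then X n m else 0)"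

definition nxt :: "real list \<Rightarrow> real" where
  "nxt ts = (if ts = [] then 0 else hd ts)"

fun Nop :: "(real \<Rightarrow> real \<Rightarrow> ('n::finite) op \<Rightarrow> 'n op) \<Rightarrow> 'n op \<Rightarrow> ('n \<Rightarrow> real)
   \<Rightarrow> real list \<Rightarrow> real list \<Rightarrow> real list \<Rightarrow> 'n op" where
  "Nop L \<rho> v (x#xs) (y#ys) (t#ts) = mask v x y (L t (nxt ts) (Nop L \<rho> v xs ys ts))"
| "Nop L \<rho> v _ _ _ = \<rho>"

definition Sg :: "(real \<Rightarrow> real \<Rightarrow> ('n::finite) op \<Rightarrow> 'n op) \<Rightarrow> ('n \<Rightarrow> real)
   \<Rightarrow> real list \<Rightarrow> real list \<Rightarrow> real list \<Rightarrow> 'n op \<Rightarrow> 'n op" where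
  "Sg L v xs ys ts Z n m = (let k = length ts in
     \<Sum>ns\<in>PiE {..<k} (\<lambda>l. {n. v n = xs ! l}). \<Sum>ms\<in>PiE {..<k} (\<lambda>l. {m. v m = ys ! l}).
       (if ns 0 = n \<and> ms 0 = m then 1 else 0) * Z (ns (k - 1)) (ms (k - 1))
       * (\<Prod>l<k - 1. Tprop L (ts ! l) (ts ! Suc l) (ns l) (ms l) (ns (Suc l)) (ms (Suc l))))"

lemma qt_Sg:
  fixes L :: "real \<Rightarrow> real \<Rightarrow> ('n::finite) op \<Rightarrow> 'n op"
  assumes "ts \<noteq> []"
  shows "qt L \<rho> v xs ys ts = (\<Sum>i\<in>UNIV. Sg L v xs ys ts (L (last ts) 0 \<rho>) i i)"
proof -
  have last: "ts ! (length ts - 1) = last ts" using assms by (simp add: last_conv_nth)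
  have d: "\<And>(a::'n) b (R::complex). (\<Sum>i\<in>UNIV. (if a = i \<and> b = i then 1 else 0) * R) = (if a = b then 1 else 0) * R"
    apply (case_tac "a = b")
     apply (simp add: ifm3)
    apply (simp add: ifm3)
    apply (rule sum.neutral)
    apply auto
    done
  show ?thesis
    unfolding qt_def Sg_def Let_def last
    apply (subst swap3)
    apply (simp only: mult.assoc d)
    done
qed

lemma Sg_single:
  fixes L :: "real \<Rightarrow> real \<Rightarrow> ('n::finite) op \<Rightarrow> 'n op"
  shows "Sg L v [x] [y] [t] Z n m = mask v x y Z n m"
proof -
  have "Sg L v [x] [y] [t] Z n m = (\<Sum>a\<in>{n. v n = x}. \<Sum>b\<in>{m. v m = y}. (if a = n \<and> b = m then 1 else 0) * Z a b)"
    unfolding Sg_def by (simp add: sum_PiE_Suc)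
  also have "\<dots> = mask v x y Z n m"
    by (subst sum_delta2) (simp_all add: mask_def)
  finally show ?thesis .
qed

lemma sum_delta2':
  fixes g :: "'a \<Rightarrow> 'b \<Rightarrow> 'c::{comm_ring_1}"
  assumes "finite S" "finite T"
  shows "(\<Sum>a\<in>S. \<Sum>b\<in>T. (if n = a \<and> m = b then 1 else 0) * g a b) = (if n \<in> S \<and> m \<in> T then g n m else 0)"
  using sum_delta2[OF assms, of n m g] by (simp add: eq_commute)

lemma prod_shift_pos: "0 < K \<Longrightarrow> (\<Prod>l<K. f l) = f 0 * (\<Prod>l<K - 1. f (Suc l))"
  by (cases K) (simp, simp only: prod.lessThan_Suc_shift diff_Suc_1)

lemma pcons_pos: "0 < K \<Longrightarrow> pcons a q K = q (K - 1)"
  by (cases K) simp_all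

lemma Sg_cons:
  fixes L :: "real \<Rightarrow> real \<Rightarrow> ('n::finite) op \<Rightarrow> 'n op"
  assumes "ts \<noteq> []"
  shows "Sg L v (x#xs) (y#ys) (t#ts) Z n m = (if v n = x \<and> v m = y then
     \<Sum>n'\<in>UNIV. \<Sum>m'\<in>UNIV. Tprop L t (hd ts) n m n' m' * Sg L v xs ys ts Z n' m' else 0)"
proof -
  define K where "K = length ts"
  have K: "0 < K" using assms by (simp add: K_def)
  have hd: "hd ts = ts ! 0" using assms by (simp add: hd_conv_nth)
  define A where "A = (\<lambda>l. {n. v n = xs ! l})"
  define B where "B = (\<lambda>l. {n. v n = ys ! l})"
  define R where "R = (\<lambda>q r. Z (q (K - 1)) (r (K - 1)) * (\<Prod>l<K - 1. Tprop L (ts!l) (ts!Suc l) (q l) (r l) (q (Suc l)) (r (Suc l))))"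
  define T where "T = (\<lambda>a b c d. Tprop L t (ts!0) a b c d)"
  have S: "Sg L v xs ys ts Z n' m' = (\<Sum>q\<in>PiE {..<K} A. \<Sum>r\<in>PiE {..<K} B.
      (if q 0 = n' \<and> r 0 = m' then 1 else 0) * R q r)" for n' m'
    unfolding Sg_def R_def A_def B_def K_def by (simp add: mult.assoc Let_def)
  have "Sg L v (x#xs) (y#ys) (t#ts) Z n m = (\<Sum>a\<in>{n. v n = x}. \<Sum>q\<in>PiE {..<K} A. \<Sum>b\<in>{m. v m = y}. \<Sum>r\<in>PiE {..<K} B.
      (if a = n \<and> b = m then 1 else 0) * (T a b (q 0) (r 0) * R q r))"
    unfolding Sg_def using K
    by (simp add: K_def[symmetric] sum_PiE_Suc prod_shift_pos pcons_pos R_def A_def B_def T_def mult_ac)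
  also have "\<dots> = (\<Sum>a\<in>{n. v n = x}. \<Sum>b\<in>{m. v m = y}. (if a = n \<and> b = m then 1 else 0) *
      (\<Sum>q\<in>PiE {..<K} A. \<Sum>r\<in>PiE {..<K} B. T a b (q 0) (r 0) * R q r))"
    by (rule sum.cong[OF refl], subst sum.swap, simp add: sum_distrib_left)
  also have "\<dots> = (if v n = x \<and> v m = y then
      (\<Sum>q\<in>PiE {..<K} A. \<Sum>r\<in>PiE {..<K} B. T n m (q 0) (r 0) * R q r) else 0)"
    by (subst sum_delta2) simp_all
  also have "(\<Sum>q\<in>PiE {..<K} A. \<Sum>r\<in>PiE {..<K} B. T n m (q 0) (r 0) * R q r)
     = (\<Sum>n'\<in>UNIV. \<Sum>m'\<in>UNIV. T n m n' m' * Sg L v xs ys ts Z n' m')"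
  proof -
    have "(\<Sum>n'\<in>UNIV. \<Sum>m'\<in>UNIV. T n m n' m' * Sg L v xs ys ts Z n' m')
      = (\<Sum>n'\<in>UNIV. \<Sum>m'\<in>UNIV. \<Sum>q\<in>PiE {..<K} A. \<Sum>r\<in>PiE {..<K} B.
          (if q 0 = n' \<and> r 0 = m' then 1 else 0) * (T n m n' m' * R q r))"
      by (simp add: S sum_distrib_left mult_ac)
    also have "\<dots> = (\<Sum>q\<in>PiE {..<K} A. \<Sum>r\<in>PiE {..<K} B. \<Sum>n'\<in>UNIV. \<Sum>m'\<in>UNIV.
          (if q 0 = n' \<and> r 0 = m' then 1 else 0) * (T n m n' m' * R q r))"
      by (rule swap4)
    also have "\<dots> = (\<Sum>q\<in>PiE {..<K} A. \<Sum>r\<in>PiE {..<K} B. T n m (q 0) (r 0) * R q r)"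
      by (subst sum_delta2') simp_all
    finally show ?thesis by simp
  qed
  finally show ?thesis by (simp add: T_def hd)
qed

lemma times_ok_Cons: "times_ok (t#ts) \<longleftrightarrow> (\<forall>x\<in>set ts. x < t) \<and> 0 \<le> t \<and> times_ok ts"
  by (auto simp: times_ok_def)

lemma times_ok_nxt: "times_ok (t#ts) \<Longrightarrow> 0 \<le> nxt ts \<and> nxt ts \<le> t"
  by (cases ts) (auto simp: times_ok_def nxt_def)

lemma nxt_Cons[simp]: "nxt (t#ts) = t" by (simp add: nxt_def)

lemma Sg_Nop:
  fixes L :: "real \<Rightarrow> real \<Rightarrow> ('n::finite) op \<Rightarrow> 'n op"
  assumes lin: "\<forall>t t'. 0 \<le> t' \<and> t' \<le> t \<longrightarrow> lin_map (L t t')"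
  shows "times_ok ts \<Longrightarrow> length xs = length ts \<Longrightarrow> length ys = length ts \<Longrightarrow> ts \<noteq> [] \<Longrightarrow>
    Sg L v xs ys ts (L (last ts) 0 \<rho>) = Nop L \<rho> v xs ys ts"
proof (induction ts arbitrary: xs ys)
  case Nil
  then show ?case by simp
next
  case (Cons t ts)
  obtain x xs' where xs: "xs = x # xs'" using Cons.prems by (cases xs) auto
  obtain y ys' where ys: "ys = y # ys'" using Cons.prems by (cases ys) auto
  show ?case
  proof (cases "ts = []")
    case True
    then show ?thesis using Cons.prems
      by (auto simp: xs ys Sg_single nxt_def intro!: ext)
  next
    case False
    have IH: "Sg L v xs' ys' ts (L (last ts) 0 \<rho>) = Nop L \<rho> v xs' ys' ts"
      using Cons.IH[of xs' ys'] Cons.prems False by (simp add: xs ys times_ok_Cons)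
    have nx: "0 \<le> nxt ts \<and> nxt ts \<le> t" using times_ok_nxt[OF Cons.prems(1)] .
    have nh: "nxt ts = hd ts" using False by (simp add: nxt_def)
    then have linm: "lin_map (L t (hd ts))" using lin nx by auto
    show ?thesis
      using False
      apply (simp add: xs ys Sg_cons)
      apply (rule ext)+
      apply (simp only: IH nh)
      apply (subst lin_expand[OF linm])
      apply (simp add: mask_def Tprop_eq mult.commute)
      done
  qed
qed

lemma qt_Nop:
  fixes L :: "real \<Rightarrow> real \<Rightarrow> ('n::finite) op \<Rightarrow> 'n op"
  assumes lin: "\<forall>t t'. 0 \<le> t' \<and> t' \<le> t \<longrightarrow> lin_map (L t t')"
  shows "times_ok ts \<Longrightarrow> length xs = length ts \<Longrightarrow> length ys = length ts \<Longrightarrow> ts \<noteq> [] \<Longrightarrow>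
    qt L \<rho> v xs ys ts = tr (Nop L \<rho> v xs ys ts)"
  by (simp add: qt_Sg Sg_Nop[OF lin] tr_def)

lemma mask_sum:
  fixes v :: "'n::finite \<Rightarrow> real"
  shows "(\<lambda>n m. \<Sum>x\<in>range v. \<Sum>y\<in>range v. mask v x y X n m) = X"
proof (intro ext)
  fix n m
  have "\<And>x. (\<Sum>y\<in>range v. mask v x y X n m) = (if v n = x then X n m else 0)"
    by (simp add: mask_def if_conj_split sum_if_out)
  then show "(\<Sum>x\<in>range v. \<Sum>y\<in>range v. mask v x y X n m) = X n m" by simp
qed

lemma tr_sum2: "(\<Sum>x\<in>A. \<Sum>y\<in>B. tr (N x y)) = tr (\<lambda>n m. \<Sum>x\<in>A. \<Sum>y\<in>B. N x y n m)"
  unfolding tr_def by (rule swap3[symmetric])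

lemma tr_mask_sum:
  fixes v :: "'n::finite \<Rightarrow> real"
  shows "(\<Sum>x\<in>range v. \<Sum>y\<in>range v. tr (mask v x y X)) = tr X"
  by (simp only: tr_sum2 mask_sum)

lemma del_Suc_Cons[simp]: "del (Suc l) (x#xs) = x # del l xs"
  by (simp add: del_def)

lemma del_0[simp]: "del 0 (x#xs) = xs"
  by (simp add: del_def)

lemma length_del[simp]: "l < length xs \<Longrightarrow> length (del l xs) = length xs - 1"
  by (simp add: del_def)

lemma set_del: "set (del l xs) \<subseteq> set xs"
  by (auto simp: del_def dest: in_set_takeD in_set_dropD)

lemma nxt_del: "1 \<le> l \<Longrightarrow> l < length ts \<Longrightarrow> nxt (del l ts) = nxt ts"
  by (cases ts; cases l) (auto simp: nxt_def del_def)

lemma times_ok_del: "times_ok ts \<Longrightarrow> times_ok (del l ts)"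
proof (induction ts arbitrary: l)
  case Nil
  then show ?case by (simp add: del_def times_ok_def)
next
  case (Cons t ts)
  then show ?case
    by (cases l) (auto simp: times_ok_Cons dest: set_del[THEN subsetD])
qed

lemma lin_sum2:
  assumes "lin_map L" 
  shows "L (\<lambda>i j. \<Sum>x\<in>range (v::'n::finite \<Rightarrow> real). \<Sum>y\<in>range v. N x y i j) = (\<lambda>i j. \<Sum>x\<in>range v. \<Sum>y\<in>range v. L (N x y) i j)"
  apply (subst lin_sum1[OF assms])
   apply simp
  apply (subst lin_sum1[OF assms])
   apply simp_all
  done

lemma Nop_marg:
  fixes L :: "real \<Rightarrow> real \<Rightarrow> ('n::finite) op \<Rightarrow> 'n op"
  assumes lin: "\<forall>t t'. 0 \<le> t' \<and> t' \<le> t \<longrightarrow> lin_map (L t t')"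
    and semigroup: "\<forall>t t' t''. 0 \<le> t'' \<and> t'' \<le> t' \<and> t' \<le> t \<longrightarrow> L t t' \<circ> L t' t'' = L t t''"
  shows "times_ok ts \<Longrightarrow> length xs = length ts \<Longrightarrow> length ys = length ts \<Longrightarrow> 1 \<le> l \<Longrightarrow> l < length ts \<Longrightarrow>
    (\<lambda>n m. \<Sum>x\<in>range v. \<Sum>y\<in>range v. Nop L \<rho> v (xs[l:=x]) (ys[l:=y]) ts n m) = Nop L \<rho> v (del l xs) (del l ys) (del l ts)"
proof (induction ts arbitrary: xs ys l)
  case Nil
  then show ?case by simp
next
  case (Cons t ts)
  obtain x0 xs' where xs: "xs = x0 # xs'" using Cons.prems by (cases xs) auto
  obtain y0 ys' where ys: "ys = y0 # ys'" using Cons.prems by (cases ys) auto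
  obtain l' where l: "l = Suc l'" using Cons.prems by (cases l) auto
  have nx: "0 \<le> nxt ts \<and> nxt ts \<le> t" using times_ok_nxt[OF Cons.prems(1)] .
  then have linm: "lin_map (L t (nxt ts))" using lin by auto
  define N where "N = (\<lambda>x y. Nop L \<rho> v (xs'[l':=x]) (ys'[l':=y]) ts)"
  have step1: "(\<lambda>n m. \<Sum>x\<in>range v. \<Sum>y\<in>range v. Nop L \<rho> v (xs[l:=x]) (ys[l:=y]) (t#ts) n m)
     = mask v x0 y0 (L t (nxt ts) (\<lambda>n m. \<Sum>x\<in>range v. \<Sum>y\<in>range v. N x y n m))"
    by (simp add: xs ys l N_def lin_sum2[OF linm] mask_def sum_if_out)
  show ?case
  proof (cases "l' = 0")
    case True
    obtain t1 ts'' where ts: "ts = t1 # ts''" using Cons.prems l True by (cases ts) auto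
    obtain x1 xs'' where xs': "xs' = x1 # xs''" using Cons.prems xs ts by (cases xs') auto
    obtain y1 ys'' where ys': "ys' = y1 # ys''" using Cons.prems ys ts by (cases ys') auto
    have tt: "0 \<le> nxt ts'' \<and> nxt ts'' \<le> t1" using times_ok_nxt Cons.prems(1) ts by (auto simp: times_ok_Cons)
    have t1: "t1 \<le> t" using nx ts by (simp add: nxt_def)
    have sg: "L t t1 (L t1 (nxt ts'') W) = L t (nxt ts'') W" for W
      using semigroup tt t1 by (metis comp_apply)
    have "(\<lambda>n m. \<Sum>x\<in>range v. \<Sum>y\<in>range v. N x y n m) = L t1 (nxt ts'') (Nop L \<rho> v xs'' ys'' ts'')"
      by (simp add: N_def True xs' ys' ts mask_sum)
    then show ?thesis using step1
      by (simp add: True xs ys l xs' ys' ts sg)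
  next
    case False
    have IH: "(\<lambda>n m. \<Sum>x\<in>range v. \<Sum>y\<in>range v. N x y n m) = Nop L \<rho> v (del l' xs') (del l' ys') (del l' ts)"
      unfolding N_def
      using Cons.IH[of xs' ys' l'] Cons.prems False by (simp add: xs ys l times_ok_Cons)
    have "nxt (del l' ts) = nxt ts" using False Cons.prems l by (simp add: nxt_del)
    then show ?thesis using step1 IH by (simp add: xs ys l)
  qed
qed

lemma qt_marg0:
  fixes L :: "real \<Rightarrow> real \<Rightarrow> ('n::finite) op \<Rightarrow> 'n op"
  assumes lin: "\<forall>t t'. 0 \<le> t' \<and> t' \<le> t \<longrightarrow> lin_map (L t t')"
    and tp: "\<forall>t t'. 0 \<le> t' \<and> t' \<le> t \<longrightarrow> trace_pres (L t t')"
    and h: "length xs = length ts" "length ys = length ts" "times_ok (t#ts)"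
  shows "(\<Sum>x\<in>range v. \<Sum>y\<in>range v. qt L \<rho> v (x#xs) (y#ys) (t#ts)) = tr (Nop L \<rho> v xs ys ts)"
proof -
  have nx: "0 \<le> nxt ts \<and> nxt ts \<le> t" using times_ok_nxt[OF h(3)] .
  have "(\<Sum>x\<in>range v. \<Sum>y\<in>range v. qt L \<rho> v (x#xs) (y#ys) (t#ts))
      = (\<Sum>x\<in>range v. \<Sum>y\<in>range v. tr (mask v x y (L t (nxt ts) (Nop L \<rho> v xs ys ts))))"
    using h by (simp add: qt_Nop[OF lin])
  also have "\<dots> = tr (L t (nxt ts) (Nop L \<rho> v xs ys ts))" by (rule tr_mask_sum)
  also have "\<dots> = tr (Nop L \<rho> v xs ys ts)" using tp nx by (simp add: trace_pres_def)
  finally show ?thesis .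
qed

lemma qt_marg:
  fixes L :: "real \<Rightarrow> real \<Rightarrow> ('n::finite) op \<Rightarrow> 'n op"
  assumes lin: "\<forall>t t'. 0 \<le> t' \<and> t' \<le> t \<longrightarrow> lin_map (L t t')"
    and tp: "\<forall>t t'. 0 \<le> t' \<and> t' \<le> t \<longrightarrow> trace_pres (L t t')"
    and semigroup: "\<forall>t t' t''. 0 \<le> t'' \<and> t'' \<le> t' \<and> t' \<le> t \<longrightarrow> L t t' \<circ> L t' t'' = L t t''"
    and h: "2 \<le> length ts" "l < length ts" "length xs = length ts" "length ys = length ts" "times_ok ts"
  shows "(\<Sum>x\<in>range v. \<Sum>y\<in>range v. qt L \<rho> v (xs[l := x]) (ys[l := y]) ts) = qt L \<rho> v (del l xs) (del l ys) (del l ts)"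
proof (cases "l = 0")
  case True
  obtain t ts' where ts: "ts = t # ts'" using h by (cases ts) auto
  obtain x0 xs' where xs: "xs = x0 # xs'" using h by (cases xs) auto
  obtain y0 ys' where ys: "ys = y0 # ys'" using h by (cases ys) auto
  have "ts' \<noteq> []" using h ts by auto
  then show ?thesis using h qt_marg0[OF lin tp, where xs=xs' and ys=ys' and ts=ts' and t=t and v=v and \<rho>=\<rho>]
    by (simp add: True xs ys ts qt_Nop[OF lin] times_ok_Cons)
next
  case False
  have "(\<Sum>x\<in>range v. \<Sum>y\<in>range v. qt L \<rho> v (xs[l := x]) (ys[l := y]) ts)
      = (\<Sum>x\<in>range v. \<Sum>y\<in>range v. tr (Nop L \<rho> v (xs[l := x]) (ys[l := y]) ts))"
    using h by (intro sum.cong refl) (subst qt_Nop[OF lin], auto)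
  also have "\<dots> = tr (\<lambda>n m. \<Sum>x\<in>range v. \<Sum>y\<in>range v. Nop L \<rho> v (xs[l := x]) (ys[l := y]) ts n m)"
    by (rule tr_sum2)
  also have "\<dots> = tr (Nop L \<rho> v (del l xs) (del l ys) (del l ts))"
    using Nop_marg[OF lin semigroup] h False by simp
  also have "\<dots> = qt L \<rho> v (del l xs) (del l ys) (del l ts)"
    using h by (subst qt_Nop[OF lin]) (auto simp: times_ok_del dest: arg_cong[where f=length])
  finally show ?thesis .
qed

lemma times_nth1: "times_ok ts \<Longrightarrow> l < length ts \<Longrightarrow> 0 \<le> ts ! l"
  by (auto simp: times_ok_def)

lemma times_nth2: "times_ok ts \<Longrightarrow> Suc l < length ts \<Longrightarrow> 0 \<le> ts ! Suc l \<and> ts ! Suc l \<le> ts ! l"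
  using sorted_wrt_nth_less[of "\<lambda>a b. a > b" ts l "Suc l"] times_nth1[of ts "Suc l"]
  by (auto simp: times_ok_def)

lemma cprod_nonneg: "(\<And>a. a \<in> A \<Longrightarrow> (0::complex) \<le> f a) \<Longrightarrow> 0 \<le> prod f A"
proof (induction A rule: infinite_finite_induct)
  case (infinite A)
  then show ?case by (simp add: less_eq_complex_def)
next
  case empty
  then show ?case by (simp add: less_eq_complex_def)
next
  case (insert x F)
  then show ?case by (simp add: mult_nonneg_nonneg)
qed

lemma sum_UNIV_1: "(\<Sum>p\<in>(UNIV::'a::finite set) \<times> {..<1::nat}. f p) = (\<Sum>a\<in>UNIV. f (a, 0))"
proof -
  have "(UNIV::'a set) \<times> {..<1::nat} = (\<lambda>a. (a,0)) ` UNIV" by auto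
  then show ?thesis by (simp add: sum.reindex inj_on_def)
qed

lemma cnj_if01: "cnj (if P then 1 else 0) = (if P then 1 else 0)" by simp

lemma cp_diag:
  fixes L :: "('n::finite) op \<Rightarrow> 'n op"
  assumes cp: "compl_pos L" and X: "psd_on UNIV X"
  shows "0 \<le> L X i i"
proof -
  define Y :: "'n \<times> nat \<Rightarrow> 'n \<times> nat \<Rightarrow> complex" where "Y = (\<lambda>p q. X (fst p) (fst q))"
  have "psd_on (UNIV \<times> {..<1}) (Y :: 'n \<times> nat \<Rightarrow> 'n \<times> nat \<Rightarrow> complex)"
    unfolding psd_on_def
  proof
    fix x :: "'n \<times> nat \<Rightarrow> complex"
    have "0 \<le> (\<Sum>a\<in>UNIV. \<Sum>c\<in>UNIV. cnj (x (a,0)) * X a c * x (c,0))"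
      using X unfolding psd_on_def by (drule_tac x="\<lambda>a. x (a,0)" in spec) simp
    then show "0 \<le> (\<Sum>p\<in>UNIV \<times> {..<1}. \<Sum>q\<in>UNIV \<times> {..<1}. cnj (x p) * Y p q * x q)"
      unfolding sum_UNIV_1 by (simp add: Y_def)
  qed
  then have "psd_on (UNIV \<times> {..<1}) (ampl L Y)" using cp unfolding compl_pos_def by blast
  then have "0 \<le> (\<Sum>p\<in>UNIV \<times> {..<1}. \<Sum>q\<in>UNIV \<times> {..<1}.
     cnj (if p = (i,0) then 1 else 0) * ampl L Y p q * (if q = (i,0) then 1 else 0))"
    unfolding psd_on_def by (drule_tac x="\<lambda>p. if p = (i,0) then 1 else 0" in spec) simp
  also have "\<dots> = ampl L Y (i,0) (i,0)"
    unfolding sum_UNIV_1 by (simp add: cnj_if01 ifm3 ifm4)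
  also have "\<dots> = L X i i"
    by (simp add: ampl_def Y_def)
  finally show ?thesis .
qed

lemma psd_ketbra: "psd_on UNIV (ketbra (n::'n::finite) n)"
proof -
  have "\<And>x::'n \<Rightarrow> complex. (\<Sum>i\<in>UNIV. \<Sum>j\<in>UNIV. cnj (x i) * ketbra n n i j * x j) = x n * cnj (x n)"
  proof -
    fix x :: "'n \<Rightarrow> complex"
    have e: "\<And>i j. cnj (x i) * ketbra n n i j * x j = (if i = n then if j = n then x n * cnj (x n) else 0 else 0)"
      by (simp add: ketbra_def)
    have "\<And>i. (\<Sum>j\<in>UNIV. cnj (x i) * ketbra n n i j * x j) = (if i = n then x n * cnj (x n) else 0)"
      by (simp only: e sum_if_out) simp
    then show "(\<Sum>i\<in>UNIV. \<Sum>j\<in>UNIV. cnj (x i) * ketbra n n i j * x j) = x n * cnj (x n)" by simp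
  qed
  then show ?thesis
    by (simp add: psd_on_def complex_mult_cnj less_eq_complex_def)
qed

lemma offdiag0:
  assumes "unit_span {(m, m') | m m'. m \<noteq> m'} (A :: ('n::finite) op)"
  shows "A i i = 0"
proof -
  obtain c where c: "A = (\<lambda>i j. \<Sum>p\<in>{(m, m') | m m'. m \<noteq> m'}. c p * ketbra (fst p) (snd p) i j)"
    using assms unfolding unit_span_def by blast
  show ?thesis unfolding c by (auto simp: ketbra_def intro!: sum.neutral)
qed

lemma qt_diag:
  fixes L :: "real \<Rightarrow> real \<Rightarrow> ('n::finite) op \<Rightarrow> 'n op"
  assumes H: "\<forall>t t'. 0 \<le> t' \<and> t' \<le> t \<longrightarrow> (\<forall>n n'. n \<noteq> n' \<longrightarrow> unit_span {(m, m') | m m'. m \<noteq> m'} (L t t' (ketbra n n')))"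
    and h: "times_ok ts" "length xs = length ts" "length ys = length ts"
  shows "qt L \<rho> v xs ys ts = (if xs = ys then 1 else 0) * pt L \<rho> v xs ts"
proof -
  define k where "k = length ts"
  define F where "F = (\<lambda>ns ms. (if ns 0 = ms 0 then 1 else 0) * L (ts ! (k - 1)) 0 \<rho> (ns (k - 1)) (ms (k - 1))
       * (\<Prod>l<k - 1. Tprop L (ts ! l) (ts ! Suc l) (ns l) (ms l) (ns (Suc l)) (ms (Suc l))))"
  define P where "P = (\<lambda>xs. PiE {..<k} (\<lambda>l. {n. v n = (xs::real list) ! l}))"
  have qt_eq: "qt L \<rho> v xs ys ts = (\<Sum>ns\<in>P xs. \<Sum>ms\<in>P ys. F ns ms)"
    unfolding qt_def Let_def F_def P_def k_def ..
  have pt_eq: "pt L \<rho> v xs ts = (\<Sum>ns\<in>P xs. F ns ns)"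
    unfolding pt_def Let_def F_def P_def k_def by (simp add: Tprop_eq)
  have chain: "\<forall>l<k. ns l = ms l" if nz: "F ns ms \<noteq> 0" for ns ms
  proof -
    have h0: "ns 0 = ms 0" using nz by (auto simp: F_def split: if_splits)
    have pr: "(\<Prod>l<k - 1. Tprop L (ts ! l) (ts ! Suc l) (ns l) (ms l) (ns (Suc l)) (ms (Suc l))) \<noteq> 0"
      using nz by (auto simp: F_def)
    have "l < k \<longrightarrow> ns l = ms l" for l
    proof (induction l)
      case 0
      then show ?case using h0 by simp
    next
      case (Suc l)
      show ?case
      proof
        assume l: "Suc l < k"
        then have e: "ns l = ms l" using Suc.IH by simp
        have fac: "Tprop L (ts ! l) (ts ! Suc l) (ns l) (ms l) (ns (Suc l)) (ms (Suc l)) \<noteq> 0"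
          using pr l by (simp add: prod_zero_iff)
        have tt: "0 \<le> ts ! Suc l \<and> ts ! Suc l \<le> ts ! l" using times_nth2[OF h(1)] l k_def by simp
        show "ns (Suc l) = ms (Suc l)"
        proof (rule ccontr)
          assume ne: "ns (Suc l) \<noteq> ms (Suc l)"
          have "unit_span {(m, m') | m m'. m \<noteq> m'} (L (ts ! l) (ts ! Suc l) (ketbra (ns (Suc l)) (ms (Suc l))))"
            using H tt ne by blast
          then have "L (ts ! l) (ts ! Suc l) (ketbra (ns (Suc l)) (ms (Suc l))) (ns l) (ns l) = 0"
            by (rule offdiag0)
          then show False using fac e by (simp add: Tprop_eq)
        qed
      qed
    qed
    then show ?thesis by blast
  qed
  have fin: "finite (P zs)" for zs unfolding P_def by (simp add: finite_PiE)
  have eqv: "ns = ms" if "ns \<in> P xs" "ms \<in> P ys" "\<forall>l<k. ns l = ms l" for ns ms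
    using that unfolding P_def PiE_iff by (auto intro: extensionalityI)
  have inner: "(\<Sum>ms\<in>P ys. F ns ms) = (if ns \<in> P ys then F ns ns else 0)" if ns: "ns \<in> P xs" for ns
  proof -
    have "(\<Sum>ms\<in>P ys. F ns ms) = (\<Sum>ms\<in>P ys. if ms = ns then F ns ns else 0)"
    proof (rule sum.cong[OF refl])
      fix ms assume ms: "ms \<in> P ys"
      show "F ns ms = (if ms = ns then F ns ns else 0)"
        using chain[of ns ms] eqv[OF ns ms] by auto
    qed
    also have "\<dots> = (if ns \<in> P ys then F ns ns else 0)" using fin by simp
    finally show ?thesis .
  qed
  have "qt L \<rho> v xs ys ts = (\<Sum>ns\<in>P xs. if ns \<in> P ys then F ns ns else 0)"
    unfolding qt_eq using inner by simp
  also have "\<dots> = (if xs = ys then 1 else 0) * pt L \<rho> v xs ts"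
  proof (cases "xs = ys")
    case True
    then show ?thesis using pt_eq by simp
  next
    case False
    have "ns \<notin> P ys" if "ns \<in> P xs" for ns
    proof
      assume "ns \<in> P ys"
      then have "\<forall>l<k. xs ! l = ys ! l" using that unfolding P_def by (auto simp: PiE_iff)
      then have "xs = ys" using h k_def by (auto intro: nth_equalityI)
      then show False using False by simp
    qed
    then show ?thesis using False by (simp add: sum.neutral)
  qed
  finally show ?thesis .
qed

lemma pt_nonneg:
  fixes L :: "real \<Rightarrow> real \<Rightarrow> ('n::finite) op \<Rightarrow> 'n op"
  assumes cp: "\<forall>t t'. 0 \<le> t' \<and> t' \<le> t \<longrightarrow> compl_pos (L t t')"
    and rho: "density \<rho>" and h: "times_ok ts" "ts \<noteq> []"
  shows "0 \<le> pt L \<rho> v xs ts"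
proof -
  define k where "k = length ts"
  have k: "0 < k" using h by (simp add: k_def)
  have a: "0 \<le> L (ts ! (k - 1)) 0 \<rho> i i" for i
    using cp_diag[of "L (ts ! (k - 1)) 0" \<rho> i] cp rho times_nth1[OF h(1), of "k - 1"] k
    by (auto simp: density_def k_def)
  have b: "0 \<le> L (ts ! l) (ts ! Suc l) (ketbra n n) i i" if "l < k - 1" for l n i
    using cp_diag[of "L (ts ! l) (ts ! Suc l)" "ketbra n n" i] cp psd_ketbra[of n]
      times_nth2[OF h(1), of l] that by (auto simp: k_def)
  show ?thesis
    unfolding pt_def Let_def k_def[symmetric]
    by (intro sum_nonneg mult_nonneg_nonneg cprod_nonneg a b) simp
qed

lemma sum_lists_Suc:
  "(\<Sum>zs\<in>{zs. set zs \<subseteq> A \<and> length zs = Suc k}. f zs) = (\<Sum>xs\<in>{xs. set xs \<subseteq> A \<and> length xs = k}. \<Sum>x\<in>A. f (x#xs))"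
proof -
  have e: "{zs. set zs \<subseteq> A \<and> length zs = Suc k} = (\<lambda>(x,xs). x#xs) ` (A \<times> {xs. set xs \<subseteq> A \<and> length xs = k})"
  proof (rule set_eqI)
    fix zs
    show "zs \<in> {zs. set zs \<subseteq> A \<and> length zs = Suc k} \<longleftrightarrow> zs \<in> (\<lambda>(x,xs). x#xs) ` (A \<times> {xs. set xs \<subseteq> A \<and> length xs = k})"
      by (cases zs) (auto simp: image_iff)
  qed
  have i: "inj_on (\<lambda>(x,xs). x#xs) (A \<times> {xs. set xs \<subseteq> A \<and> length xs = k})"
    by (auto simp: inj_on_def)
  have "(\<Sum>zs\<in>{zs. set zs \<subseteq> A \<and> length zs = Suc k}. f zs) = (\<Sum>p\<in>A \<times> {xs. set xs \<subseteq> A \<and> length xs = k}. f ((\<lambda>(x,xs). x#xs) p))"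
    unfolding e using sum.reindex[OF i, of f] by (simp add: comp_def)
  also have "\<dots> = (\<Sum>x\<in>A. \<Sum>xs\<in>{xs. set xs \<subseteq> A \<and> length xs = k}. f (x#xs))"
    by (simp add: sum.cartesian_product case_prod_beta')
  also have "\<dots> = (\<Sum>xs\<in>{xs. set xs \<subseteq> A \<and> length xs = k}. \<Sum>x\<in>A. f (x#xs))"
    by (rule sum.swap)
  finally show ?thesis .
qed

lemma diag_row:
  assumes "x \<in> S" "finite S" "\<And>y. g y = (if x = y then 1 else 0) * (p::complex)"
  shows "(\<Sum>y\<in>S. g y) = p"
  using assms by (simp add: ifm3)

lemma pt_marg:
  fixes L :: "real \<Rightarrow> real \<Rightarrow> ('n::finite) op \<Rightarrow> 'n op"
  assumes lin: "\<forall>t t'. 0 \<le> t' \<and> t' \<le> t \<longrightarrow> lin_map (L t t')"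
    and tp: "\<forall>t t'. 0 \<le> t' \<and> t' \<le> t \<longrightarrow> trace_pres (L t t')"
    and semigroup: "\<forall>t t' t''. 0 \<le> t'' \<and> t'' \<le> t' \<and> t' \<le> t \<longrightarrow> L t t' \<circ> L t' t'' = L t t''"
    and H: "\<forall>t t'. 0 \<le> t' \<and> t' \<le> t \<longrightarrow> (\<forall>n n'. n \<noteq> n' \<longrightarrow> unit_span {(m, m') | m m'. m \<noteq> m'} (L t t' (ketbra n n')))"
    and h: "2 \<le> length ts" "l < length ts" "length xs = length ts" "times_ok ts"
  shows "(\<Sum>x\<in>range v. pt L \<rho> v (xs[l := x]) ts) = pt L \<rho> v (del l xs) (del l ts)"
proof -
  have "(\<Sum>x\<in>range v. pt L \<rho> v (xs[l := x]) ts) = (\<Sum>x\<in>range v. \<Sum>y\<in>range v. qt L \<rho> v (xs[l := x]) (xs[l := y]) ts)"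
  proof (rule sum.cong[OF refl])
    fix x assume x: "x \<in> range v"
    have upd: "(xs[l := x] = xs[l := y]) = (x = y)" for y
      using h by (metis nth_list_update_eq)
    show "pt L \<rho> v (xs[l := x]) ts = (\<Sum>y\<in>range v. qt L \<rho> v (xs[l := x]) (xs[l := y]) ts)"
      by (rule diag_row[OF x, symmetric]) (use h in \<open>simp_all add: qt_diag[OF H] upd\<close>)
  qed
  also have "\<dots> = qt L \<rho> v (del l xs) (del l xs) (del l ts)"
    using qt_marg[OF lin tp semigroup h(1,2,3,3,4)] .
  also have "\<dots> = pt L \<rho> v (del l xs) (del l ts)"
    using h by (simp add: qt_diag[OF H] times_ok_del)
  finally show ?thesis .
qed

lemma pt_norm:
  fixes L :: "real \<Rightarrow> real \<Rightarrow> ('n::finite) op \<Rightarrow> 'n op"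
  assumes lin: "\<forall>t t'. 0 \<le> t' \<and> t' \<le> t \<longrightarrow> lin_map (L t t')"
    and tp: "\<forall>t t'. 0 \<le> t' \<and> t' \<le> t \<longrightarrow> trace_pres (L t t')"
    and semigroup: "\<forall>t t' t''. 0 \<le> t'' \<and> t'' \<le> t' \<and> t' \<le> t \<longrightarrow> L t t' \<circ> L t' t'' = L t t''"
    and H: "\<forall>t t'. 0 \<le> t' \<and> t' \<le> t \<longrightarrow> (\<forall>n n'. n \<noteq> n' \<longrightarrow> unit_span {(m, m') | m m'. m \<noteq> m'} (L t t' (ketbra n n')))"
    and rho: "density \<rho>"
  shows "ts \<noteq> [] \<Longrightarrow> times_ok ts \<Longrightarrow> (\<Sum>xs\<in>{xs. set xs \<subseteq> range v \<and> length xs = length ts}. pt L \<rho> v xs ts) = 1"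
proof (induction ts)
  case Nil
  then show ?case by simp
next
  case (Cons t ts)
  show ?case
  proof (cases "ts = []")
    case True
    have "(\<Sum>x\<in>range v. pt L \<rho> v [x] [t]) = (\<Sum>x\<in>range v. \<Sum>y\<in>range v. qt L \<rho> v [x] [y] [t])"
    proof (rule sum.cong[OF refl])
      fix x assume x: "x \<in> range v"
      show "pt L \<rho> v [x] [t] = (\<Sum>y\<in>range v. qt L \<rho> v [x] [y] [t])"
        by (rule diag_row[OF x, symmetric]) (use Cons.prems True in \<open>simp_all add: qt_diag[OF H]\<close>)
    qed
    also have "\<dots> = tr \<rho>"
      using qt_marg0[OF lin tp, where xs="[]" and ys="[]" and ts="[]" and t=t and v=v and \<rho>=\<rho>] Cons.prems True
      by simp
    also have "\<dots> = 1" using rho by (simp add: density_def)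
    moreover have "{xs. set xs \<subseteq> range v \<and> length xs = 0} = {[]}" by auto
    ultimately show ?thesis using True by (simp add: sum_lists_Suc del: length_0_conv)
  next
    case False
    have tok: "times_ok ts" using Cons.prems by (simp add: times_ok_Cons)
    have "(\<Sum>x\<in>range v. pt L \<rho> v (x#xs) (t#ts)) = pt L \<rho> v xs ts" if "length xs = length ts" for xs
      using pt_marg[OF lin tp semigroup H, of "t#ts" 0 "0#xs" \<rho> v] that False Cons.prems
      by (cases ts) auto
    then have "(\<Sum>zs\<in>{zs. set zs \<subseteq> range v \<and> length zs = length (t#ts)}. pt L \<rho> v zs (t#ts))
        = (\<Sum>xs\<in>{xs. set xs \<subseteq> range v \<and> length xs = length ts}. pt L \<rho> v xs ts)"
      by (simp add: sum_lists_Suc)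
    also have "\<dots> = 1" using Cons.IH False tok by simp
    finally show ?thesis .
  qed
qed


theorem mainTheorem5:
  fixes \<Lambda> :: "real \<Rightarrow> real \<Rightarrow> ('n::finite) op \<Rightarrow> 'n op"
    and \<rho> :: "'n op" and v :: "'n \<Rightarrow> real"
  assumes lin: "\<forall>t t'. 0 \<le> t' \<and> t' \<le> t \<longrightarrow> lin_map (\<Lambda> t t')"
    and cp: "\<forall>t t'. 0 \<le> t' \<and> t' \<le> t \<longrightarrow> compl_pos (\<Lambda> t t')"
    and tp: "\<forall>t t'. 0 \<le> t' \<and> t' \<le> t \<longrightarrow> trace_pres (\<Lambda> t t')"
    and semigroup: "\<forall>t t' t''. 0 \<le> t'' \<and> t'' \<le> t' \<and> t' \<le> t \<longrightarrow> \<Lambda> t t' \<circ> \<Lambda> t' t'' = \<Lambda> t t''"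
    and ident: "\<forall>t. 0 \<le> t \<longrightarrow> \<Lambda> t t = id"
    and rho: "density \<rho>"
  shows "(\<forall>k l xs ys ts. 2 \<le> k \<and> l < k \<and> length xs = k \<and> length ys = k \<and> length ts = k
            \<and> set xs \<subseteq> range v \<and> set ys \<subseteq> range v \<and> times_ok ts \<longrightarrow>
            (\<Sum>x\<in>range v. \<Sum>y\<in>range v. qt \<Lambda> \<rho> v (xs[l := x]) (ys[l := y]) ts)
              = qt \<Lambda> \<rho> v (del l xs) (del l ys) (del l ts))
       \<and> (\<forall>t. 0 \<le> t \<longrightarrow> (\<Sum>x\<in>range v. \<Sum>y\<in>range v. qt \<Lambda> \<rho> v [x] [y] [t]) = 1)
       \<and> ((\<forall>t t'. 0 \<le> t' \<and> t' \<le> t \<longrightarrow>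
              (\<forall>n. unit_span {(m, m) | m. True} (\<Lambda> t t' (ketbra n n)))
            \<and> (\<forall>n n'. n \<noteq> n' \<longrightarrow> unit_span {(m, m') | m m'. m \<noteq> m'} (\<Lambda> t t' (ketbra n n'))))
          \<longrightarrow>
            (\<forall>k xs ys ts. 1 \<le> k \<and> length xs = k \<and> length ys = k \<and> length ts = k
               \<and> set xs \<subseteq> range v \<and> set ys \<subseteq> range v \<and> times_ok ts \<longrightarrow>
               qt \<Lambda> \<rho> v xs ys ts = (if xs = ys then 1 else 0) * pt \<Lambda> \<rho> v xs ts
               \<and> 0 \<le> pt \<Lambda> \<rho> v xs ts)
          \<and> (\<forall>k ts. 1 \<le> k \<and> length ts = k \<and> times_ok ts \<longrightarrow>
               (\<Sum>xs\<in>{xs. set xs \<subseteq> range v \<and> length xs = k}. pt \<Lambda> \<rho> v xs ts) = 1)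
          \<and> (\<forall>k l xs ts. 2 \<le> k \<and> l < k \<and> length xs = k \<and> length ts = k
               \<and> set xs \<subseteq> range v \<and> times_ok ts \<longrightarrow>
               (\<Sum>x\<in>range v. pt \<Lambda> \<rho> v (xs[l := x]) ts) = pt \<Lambda> \<rho> v (del l xs) (del l ts)))"
  proof -
  have H: "\<forall>t t'. 0 \<le> t' \<and> t' \<le> t \<longrightarrow> (\<forall>n n'. n \<noteq> n' \<longrightarrow> unit_span {(m, m') | m m'. m \<noteq> m'} (\<Lambda> t t' (ketbra n n')))"
    if "\<forall>t t'. 0 \<le> t' \<and> t' \<le> t \<longrightarrow>
              (\<forall>n. unit_span {(m, m) | m. True} (\<Lambda> t t' (ketbra n n)))
            \<and> (\<forall>n n'. n \<noteq> n' \<longrightarrow> unit_span {(m, m') | m m'. m \<noteq> m'} (\<Lambda> t t' (ketbra n n')))"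
    using that by blast
  have P1: "\<forall>k l xs ys ts. 2 \<le> k \<and> l < k \<and> length xs = k \<and> length ys = k \<and> length ts = k
            \<and> set xs \<subseteq> range v \<and> set ys \<subseteq> range v \<and> times_ok ts \<longrightarrow>
            (\<Sum>x\<in>range v. \<Sum>y\<in>range v. qt \<Lambda> \<rho> v (xs[l := x]) (ys[l := y]) ts)
              = qt \<Lambda> \<rho> v (del l xs) (del l ys) (del l ts)"
    using qt_marg[OF lin tp semigroup] by auto
  have P2: "\<forall>t. 0 \<le> t \<longrightarrow> (\<Sum>x\<in>range v. \<Sum>y\<in>range v. qt \<Lambda> \<rho> v [x] [y] [t]) = 1"
  proof (intro allI impI)
    fix t :: real assume t: "0 \<le> t"
    have "(\<Sum>x\<in>range v. \<Sum>y\<in>range v. qt \<Lambda> \<rho> v [x] [y] [t]) = tr \<rho>"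
      using qt_marg0[OF lin tp, where xs="[]" and ys="[]" and ts="[]" and t=t and v=v and \<rho>=\<rho>] t
      by (simp add: times_ok_def)
    then show "(\<Sum>x\<in>range v. \<Sum>y\<in>range v. qt \<Lambda> \<rho> v [x] [y] [t]) = 1"
      using rho by (simp add: density_def)
  qed
  have P3: "(\<forall>k xs ys ts. 1 \<le> k \<and> length xs = k \<and> length ys = k \<and> length ts = k
               \<and> set xs \<subseteq> range v \<and> set ys \<subseteq> range v \<and> times_ok ts \<longrightarrow>
               qt \<Lambda> \<rho> v xs ys ts = (if xs = ys then 1 else 0) * pt \<Lambda> \<rho> v xs ts
               \<and> 0 \<le> pt \<Lambda> \<rho> v xs ts)
          \<and> (\<forall>k ts. 1 \<le> k \<and> length ts = k \<and> times_ok ts \<longrightarrow>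
               (\<Sum>xs\<in>{xs. set xs \<subseteq> range v \<and> length xs = k}. pt \<Lambda> \<rho> v xs ts) = 1)
          \<and> (\<forall>k l xs ts. 2 \<le> k \<and> l < k \<and> length xs = k \<and> length ts = k
               \<and> set xs \<subseteq> range v \<and> times_ok ts \<longrightarrow>
               (\<Sum>x\<in>range v. pt \<Lambda> \<rho> v (xs[l := x]) ts) = pt \<Lambda> \<rho> v (del l xs) (del l ts))"
    if hyp: "\<forall>t t'. 0 \<le> t' \<and> t' \<le> t \<longrightarrow>
              (\<forall>n. unit_span {(m, m) | m. True} (\<Lambda> t t' (ketbra n n)))
            \<and> (\<forall>n n'. n \<noteq> n' \<longrightarrow> unit_span {(m, m') | m m'. m \<noteq> m'} (\<Lambda> t t' (ketbra n n')))"
  proof (intro conjI allI impI)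
    have H': "\<forall>t t'. 0 \<le> t' \<and> t' \<le> t \<longrightarrow> (\<forall>n n'. n \<noteq> n' \<longrightarrow> unit_span {(m, m') | m m'. m \<noteq> m'} (\<Lambda> t t' (ketbra n n')))"
      using H[OF hyp] .
    fix k xs ys ts
    assume a: "1 \<le> k \<and> length xs = k \<and> length ys = k \<and> length ts = k
               \<and> set xs \<subseteq> range v \<and> set ys \<subseteq> range v \<and> times_ok ts"
    then show "qt \<Lambda> \<rho> v xs ys ts = (if xs = ys then 1 else 0) * pt \<Lambda> \<rho> v xs ts"
      by (simp add: qt_diag[OF H'])
    show "0 \<le> pt \<Lambda> \<rho> v xs ts"
      using a by (intro pt_nonneg[OF cp rho]) auto
  next
    have H': "\<forall>t t'. 0 \<le> t' \<and> t' \<le> t \<longrightarrow> (\<forall>n n'. n \<noteq> n' \<longrightarrow> unit_span {(m, m') | m m'. m \<noteq> m'} (\<Lambda> t t' (ketbra n n')))"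
      using H[OF hyp] .
    fix k ts
    assume a: "1 \<le> k \<and> length ts = k \<and> times_ok ts"
    then show "(\<Sum>xs\<in>{xs. set xs \<subseteq> range v \<and> length xs = k}. pt \<Lambda> \<rho> v xs ts) = 1"
      using pt_norm[OF lin tp semigroup H' rho, where ts=ts and v=v] by (cases ts) auto
  next
    have H': "\<forall>t t'. 0 \<le> t' \<and> t' \<le> t \<longrightarrow> (\<forall>n n'. n \<noteq> n' \<longrightarrow> unit_span {(m, m') | m m'. m \<noteq> m'} (\<Lambda> t t' (ketbra n n')))"
      using H[OF hyp] .
    fix k l xs ts
    assume a: "2 \<le> k \<and> l < k \<and> length xs = k \<and> length ts = k \<and> set xs \<subseteq> range v \<and> times_ok ts"
    then show "(\<Sum>x\<in>range v. pt \<Lambda> \<rho> v (xs[l := x]) ts) = pt \<Lambda> \<rho> v (del l xs) (del l ts)"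
      using pt_marg[OF lin tp semigroup H', where ts=ts and l=l and xs=xs and v=v and \<rho>=\<rho>] by auto
  qed
  show ?thesis using P1 P2 P3 by blast
qed

end
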